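(* Let $\lambda\in\Lambda$ be such that $V_O\cap V_\lambda\neq\emptyset$. Then $V_O\cap V_\lambda$ is contained in an affine subspace of $H$ of codimension equal to the genus of the oriented graph $\mathrm{supp}(\lambda)$. In particular, if $V_O\cap V_\lambda$ is a face of codimension one of $V_O$, then $\mathrm{supp}(\lambda)$ is a circuit $C$ and $\lambda=x^C$.
   Context: $G=(V,E)$ is a finite connected graph, possibly with parallel edges and loops; $\mathbb E$ is the set of oriented edges ($e$ and its reverse $\bar e$). Real $1$-chains $x:\mathbb E\to\mathbb R$ satisfy $x_{\bar e}=-x_e$; $\langle x,y\rangle=\sum_{e\in E}x_ey_e$, $q(x)=\langle x,x\rangle$. A flow satisfies $\sum_{e\text{ with tail }v}x_e=0$ at every vertex $v$; $H$ is the space of real flows and $\Lambda$ the lattice of integer flows. $V_\lambda=\{x\in H: q(x-\lambda)\le q(x-\mu)\ \forall\mu\in\Lambda\}$, $O$ the origin. For a flow $x$, $\mathrm{supp}(x)=\{e\in\mathbb E: x_e>0\}$, viewed as an oriented subgraph; its genus is the first Betti number of the underlying graph. A circuit is an orientation of a cycle as a directed cycle (a loop is a circuit of length one). For an oriented subgraph $D$ (containing at most one of $e,\bar e$ per edge), $x^D$ is the $1$-chain with $x^D_e=1$ if $e\in D$, $-1$ if $\bar e\in D$, $0$ otherwise. *)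

theory Defs
  imports "HOL-Analysis.Analysis"
begin

text \<open>A finite graph (parallel edges and loops allowed) is given by a finite vertex
type 'v, a finite edge type 'e, and endpoint maps src tgt :: 'e => 'v fixing a
reference orientation of every edge. Oriented edges are pairs (e, b) :: 'e \<times> bool,
where (e, True) is e in its reference orientation (src e -> tgt e) and (e, False)
is its reverse. A real 1-chain is a vector x :: real^'e (its value on the
reference orientation); its value on the reverse orientation is - x$e.\<close>

definition otail :: "('e \<Rightarrow> 'v) \<Rightarrow> ('e \<Rightarrow> 'v) \<Rightarrow> 'e \<times> bool \<Rightarrow> 'v" where
  "otail src tgt d = (if snd d then src (fst d) else tgt (fst d))"

definition ohead :: "('e \<Rightarrow> 'v) \<Rightarrow> ('e \<Rightarrow> 'v) \<Rightarrow> 'e \<times> bool \<Rightarrow> 'v" where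
  "ohead src tgt d = (if snd d then tgt (fst d) else src (fst d))"

definition oval :: "real^'e \<Rightarrow> 'e \<times> bool \<Rightarrow> real" where
  "oval x d = (if snd d then x $ fst d else - (x $ fst d))"

definition graph_connected :: "('e::finite \<Rightarrow> 'v) \<Rightarrow> ('e \<Rightarrow> 'v) \<Rightarrow> bool" where
  "graph_connected src tgt \<longleftrightarrow>
     (\<forall>u w. (u, w) \<in> ({(src e, tgt e) | e. True} \<union> {(tgt e, src e) | e. True})\<^sup>*)"

definition qf :: "real^'e::finite \<Rightarrow> real" where
  "qf x = (\<Sum>e\<in>UNIV. (x $ e)^2)"

definition is_flow :: "('e::finite \<Rightarrow> 'v) \<Rightarrow> ('e \<Rightarrow> 'v) \<Rightarrow> real^'e \<Rightarrow> bool" where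
  "is_flow src tgt x \<longleftrightarrow>
     (\<forall>v. (\<Sum>d\<in>{d. otail src tgt d = v}. oval x d) = 0)"

definition flows :: "('e::finite \<Rightarrow> 'v) \<Rightarrow> ('e \<Rightarrow> 'v) \<Rightarrow> (real^'e) set" where
  "flows src tgt = {x. is_flow src tgt x}"

definition int_flows :: "('e::finite \<Rightarrow> 'v) \<Rightarrow> ('e \<Rightarrow> 'v) \<Rightarrow> (real^'e) set" where
  "int_flows src tgt = {x \<in> flows src tgt. \<forall>e. x $ e \<in> \<int>}"

definition voronoi :: "('e::finite \<Rightarrow> 'v) \<Rightarrow> ('e \<Rightarrow> 'v) \<Rightarrow> real^'e \<Rightarrow> (real^'e) set" where
  "voronoi src tgt l =
     {x \<in> flows src tgt. \<forall>\<mu>\<in>int_flows src tgt. qf (x - l) \<le> qf (x - \<mu>)}"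

definition supp :: "real^'e \<Rightarrow> ('e \<times> bool) set" where
  "supp x = {d. oval x d > 0}"

definition genus :: "('e \<Rightarrow> 'v) \<Rightarrow> ('e \<Rightarrow> 'v) \<Rightarrow> ('e \<times> bool) set \<Rightarrow> nat" where
  "genus src tgt D =
     (let Es = fst ` D;
          Vs = src ` Es \<union> tgt ` Es;
          R = ({(src e, tgt e) | e. e \<in> Es} \<union> {(tgt e, src e) | e. e \<in> Es})\<^sup>*
      in card Es + card (Vs // R) - card Vs)"

text \<open>Circuit: D is the edge set of a directed cycle (a loop is a circuit of length one).\<close>
definition is_circuit :: "('e \<Rightarrow> 'v) \<Rightarrow> ('e \<Rightarrow> 'v) \<Rightarrow> ('e \<times> bool) set \<Rightarrow> bool" where
  "is_circuit src tgt D \<longleftrightarrow>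
     (\<exists>cs. cs \<noteq> [] \<and> set cs = D \<and> distinct (map fst cs)
        \<and> distinct (map (otail src tgt) cs)
        \<and> (\<forall>i<length cs. ohead src tgt (cs ! i) = otail src tgt (cs ! ((i + 1) mod length cs))))"

definition chain_of :: "('e \<times> bool) set \<Rightarrow> real^'e" where
  "chain_of D = (\<chi> e. if (e, True) \<in> D then 1 else if (e, False) \<in> D then -1 else 0)"

end

theory Submission
  imports Defs
begin


lemma qf_inner: "qf x = x \<bullet> x"
  by (simp add: qf_def inner_vec_def power2_eq_square)

definition bd :: "('e::finite \<Rightarrow> 'v::finite) \<Rightarrow> ('e \<Rightarrow> 'v) \<Rightarrow> real^'e \<Rightarrow> real^'v" where
  "bd src tgt y = (\<chi> v. \<Sum>e\<in>UNIV. y$e * ((if src e = v then 1 else 0) - (if tgt e = v then 1 else 0)))"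

definition cob :: "('e::finite \<Rightarrow> 'v::finite) \<Rightarrow> ('e \<Rightarrow> 'v) \<Rightarrow> real^'v \<Rightarrow> real^'e" where
  "cob src tgt z = (\<chi> e. z$(src e) - z$(tgt e))"

lemma linear_bd: "linear (bd src tgt)"
  by (rule linearI) (auto simp: bd_def vec_eq_iff sum.distrib[symmetric] sum_distrib_left intro!: sum.cong; simp add: algebra_simps)+

lemma bd_inner: "bd src tgt y \<bullet> z = y \<bullet> cob src tgt z"
proof -
  have "bd src tgt y \<bullet> z = (\<Sum>v\<in>UNIV. \<Sum>e\<in>UNIV. y$e * ((if src e = v then 1 else 0) - (if tgt e = v then 1 else 0)) * z$v)"
    by (simp add: bd_def inner_vec_def sum_distrib_right)
  also have "\<dots> = (\<Sum>e\<in>UNIV. \<Sum>v\<in>UNIV. y$e * ((if src e = v then 1 else 0) - (if tgt e = v then 1 else 0)) * z$v)"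
    by (rule sum.swap)
  also have "\<dots> = (\<Sum>e\<in>UNIV. y$e * (z$(src e) - z$(tgt e)))"
  proof (rule sum.cong[OF refl])
    fix e
    have "(\<Sum>v\<in>UNIV. y$e * ((if src e = v then 1 else 0) - (if tgt e = v then 1 else 0)) * z$v)
       = (\<Sum>v\<in>UNIV. (if src e = v then y$e * z$v else 0) - (if tgt e = v then y$e * z$v else 0))"
      by (rule sum.cong) auto
    also have "\<dots> = y$e * (z$(src e) - z$(tgt e))"
      by (simp add: sum_subtractf algebra_simps)
    finally show "(\<Sum>v\<in>UNIV. y$e * ((if src e = v then 1 else 0) - (if tgt e = v then 1 else 0)) * z$v) = y$e * (z$(src e) - z$(tgt e))" .
  qed
  finally show ?thesis by (simp add: cob_def inner_vec_def)
qed


lemma is_flow_bd: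
  fixes src tgt :: "'e::finite \<Rightarrow> 'v::finite"
  shows "is_flow src tgt y \<longleftrightarrow> bd src tgt y = 0"
proof -
  have "(\<Sum>d\<in>{d. otail src tgt d = v}. oval y d) = bd src tgt y $ v" for v
  proof -
    have "(\<Sum>d\<in>{d. otail src tgt d = v}. oval y d) = (\<Sum>d\<in>UNIV. if otail src tgt d = v then oval y d else 0)"
      by (simp add: sum.If_cases)
    also have "\<dots> = (\<Sum>e\<in>UNIV. \<Sum>b\<in>UNIV. if otail src tgt (e,b) = v then oval y (e,b) else 0)"
      by (simp add: UNIV_Times_UNIV[symmetric] sum.cartesian_product del: UNIV_Times_UNIV)
    also have "\<dots> = bd src tgt y $ v"
      by (auto simp: bd_def UNIV_bool otail_def oval_def intro!: sum.cong)
    finally show ?thesis .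
  qed
  then show ?thesis by (simp add: is_flow_def vec_eq_iff)
qed

lemma flows_bd:
  fixes src tgt :: "'e::finite \<Rightarrow> 'v::finite"
  shows "flows src tgt = {y. bd src tgt y = 0}"
  by (simp add: flows_def is_flow_bd)

lemma subspace_flows:
  fixes src tgt :: "'e::finite \<Rightarrow> 'v::finite"
  shows "subspace (flows src tgt)"
  unfolding flows_bd using linear_bd by (rule linear_subspace_kernel)



lemma rank_nullity:
  fixes f :: "'a::euclidean_space \<Rightarrow> 'b::euclidean_space"
  assumes lf: "linear f" and S: "subspace S"
  shows "dim (f ` S) + dim {x\<in>S. f x = 0} = dim S"
proof -
  define N where "N = {x\<in>S. f x = 0}"
  define N' where "N' = {y\<in>S. \<forall>x\<in>N. orthogonal x y}"
  have sN: "subspace N" unfolding N_def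
    using subspace_inter[OF S linear_subspace_kernel[OF lf]] by (simp add: Int_def)
  have NS: "N \<subseteq> S" by (auto simp: N_def)
  have d1: "dim N' + dim N = dim S"
    unfolding N'_def by (rule dim_subspace_orthogonal_to_vectors[OF sN S NS])
  have sN': "subspace N'" unfolding N'_def
    by (auto simp: subspace_def orthogonal_def inner_add_right S[unfolded subspace_def])
  have img: "f ` S = f ` N'"
  proof
    show "f ` N' \<subseteq> f ` S" by (auto simp: N'_def)
    show "f ` S \<subseteq> f ` N'"
    proof
      fix u assume "u \<in> f ` S"
      then obtain x where x: "x \<in> S" "u = f x" by auto
      obtain p q where p: "p \<in> span N" and q: "\<And>w. w \<in> span N \<Longrightarrow> orthogonal q w" and xpq: "x = p + q"
        using orthogonal_subspace_decomp_exists[of N x] by blast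
      have pN: "p \<in> N" using p sN by (metis span_eq_iff)
      have qS: "q \<in> S" using xpq x pN NS S by (metis add_diff_cancel_left' subsetD subspace_diff)
      have "q \<in> N'" using qS q span_base by (auto simp: N'_def orthogonal_commute)
      moreover have "f x = f q" using pN xpq linear_add[OF lf] by (auto simp: N_def)
      ultimately show "u \<in> f ` N'" using x by auto
    qed
  qed
  have inj: "inj_on f (span N')"
  proof (rule inj_onI)
    fix a b assume a: "a \<in> span N'" and b: "b \<in> span N'" and ab: "f a = f b"
    have aN: "a \<in> N'" "b \<in> N'" using a b sN' by (metis span_eq_iff)+
    then have "a - b \<in> N'" using sN' subspace_diff by blast
    moreover have "a - b \<in> N" using aN ab linear_diff[OF lf] S
      by (auto simp: N_def N'_def subspace_diff)
    ultimately have "orthogonal (a - b) (a - b)" by (auto simp: N'_def)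
    then show "a = b" by (simp add: orthogonal_def)
  qed
  have "dim (f ` S) = dim N'" using img dim_image_eq[OF lf inj] by simp
  then show ?thesis using d1 by (simp add: N_def)
qed

lemma dim_coord:
  fixes d :: "'n::finite set"
  shows "dim {x::real^'n. \<forall>i. i \<notin> d \<longrightarrow> x$i = 0} = card d"
  using dim_substandard_cart[where 'a=real and d=d] unfolding dim_vec_eq .

lemma subspace_coord: "subspace {x::real^'n::finite. \<forall>i. i \<notin> d \<longrightarrow> x$i = 0}"
  by (auto simp: subspace_def)



definition ind :: "'v::finite set \<Rightarrow> real^'v" where
  "ind X = (\<chi> v. if v \<in> X then 1 else 0)"

lemma ind_inj: "ind X = ind Y \<Longrightarrow> X = Y"
  by (auto simp: ind_def vec_eq_iff) (metis zero_neq_one)+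

lemma gen_R_const:
  assumes "(u, w) \<in> (G \<union> G\<inverse>)\<^sup>*" and "\<forall>(a,b)\<in>G. f a = f b"
  shows "f u = f w"
  using assms(1) by (induction rule: rtrancl_induct) (use assms(2) in auto)

lemma dim_K:
  fixes src tgt :: "'e::finite \<Rightarrow> 'v::finite" and Es :: "'e set"
  defines "Vs \<equiv> src ` Es \<union> tgt ` Es"
  defines "R \<equiv> ({(src e, tgt e) | e. e \<in> Es} \<union> {(tgt e, src e) | e. e \<in> Es})\<^sup>*"
  shows "dim {z::real^'v. (\<forall>v. v \<notin> Vs \<longrightarrow> z$v = 0) \<and> (\<forall>e\<in>Es. z$(src e) = z$(tgt e))} = card (Vs // R)"
proof -
  define G where "G = {(src e, tgt e) | e. e \<in> Es}"
  have "{(tgt e, src e) | e. e \<in> Es} = G\<inverse>" by (auto simp: G_def)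
  then have RG: "R = (G \<union> G\<inverse>)\<^sup>*" by (simp add: R_def G_def)
  have eqR: "equiv UNIV R" unfolding RG
  proof (rule equivI)
    show "sym ((G \<union> G\<inverse>)\<^sup>*)" by (rule sym_rtrancl) (simp add: sym_Un_converse)
  qed (auto simp: refl_rtrancl trans_rtrancl)
  define K where "K = {z::real^'v. (\<forall>v. v \<notin> Vs \<longrightarrow> z$v = 0) \<and> (\<forall>e\<in>Es. z$(src e) = z$(tgt e))}"
  define Q where "Q = Vs // R"
  have Rvs: "w \<in> Vs" if "(u, w) \<in> R" "u \<in> Vs" for u w
    using that(1) unfolding RG by (induction rule: rtrancl_induct) (use that(2) in \<open>auto simp: G_def Vs_def\<close>)
  have QU: "Q \<subseteq> UNIV // R" by (auto simp: Q_def quotient_def)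
  have Qsub: "X \<subseteq> Vs" if "X \<in> Q" for X
    using that Rvs by (auto simp: Q_def quotient_def)
  have Qne: "X \<noteq> {}" if "X \<in> Q" for X
    using that eqR by (auto simp: Q_def quotient_def equiv_def refl_on_def)
  have Qdisj: "X = Y \<or> X \<inter> Y = {}" if "X \<in> Q" "Y \<in> Q" for X Y
    using quotient_disj[OF eqR] that QU by blast
  define B where "B = ind ` Q"
  have finQ: "finite Q" by (simp add: finite_subset[OF subset_UNIV])
  have cardB: "card B = card Q" unfolding B_def
    by (rule card_image) (meson inj_onI ind_inj)
  have indinner: "ind X \<bullet> ind Y = 0" if "X \<inter> Y = {}" for X Y
    using that by (auto simp: ind_def inner_vec_def intro!: sum.neutral)
  have indne: "ind X \<noteq> 0" if "X \<noteq> {}" for X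
    using that by (auto simp: ind_def vec_eq_iff)
  have indep: "independent B"
  proof (rule pairwise_orthogonal_independent)
    show "pairwise orthogonal B" unfolding B_def pairwise_def orthogonal_def
      using Qdisj indinner by (metis imageE)
    show "0 \<notin> B" unfolding B_def using Qne indne by (metis imageE)
  qed
  have sK: "subspace K" by (auto simp: K_def subspace_def)
  have BK: "B \<subseteq> K"
  proof
    fix b assume "b \<in> B"
    then obtain X where X: "X \<in> Q" "b = ind X" by (auto simp: B_def)
    then obtain x where x: "x \<in> Vs" "X = R``{x}" by (auto simp: Q_def quotient_def)
    have "src e \<in> X \<longleftrightarrow> tgt e \<in> X" if "e \<in> Es" for e
    proof -
      have "(src e, tgt e) \<in> R" "(tgt e, src e) \<in> R" using that by (auto simp: R_def)
      then show ?thesis using x eqR by (auto dest: equiv_class_eq_iff[OF eqR, THEN iffD1] intro: transD[OF trans_rtrancl] simp: RG[symmetric] equiv_def trans_def)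
    qed
    then show "b \<in> K" using X Qsub by (auto simp: K_def ind_def)
  qed
  have KB: "K \<subseteq> span B"
  proof
    fix z assume z: "z \<in> K"
    have zc: "z$u = z$w" if "(u,w) \<in> R" for u w
      using gen_R_const[of u w G "\<lambda>v. z$v"] that z by (auto simp: RG K_def G_def)
    define rep where "rep X = (SOME v. v \<in> X)" for X :: "'v set"
    have repX: "rep X \<in> X" if "X \<in> Q" for X using Qne[OF that] by (auto simp: rep_def intro: someI_ex)
    have "z = (\<Sum>X\<in>Q. z$(rep X) *\<^sub>R ind X)"
    proof (subst vec_eq_iff, rule allI)
      fix u
      show "z$u = (\<Sum>X\<in>Q. z$(rep X) *\<^sub>R ind X) $ u"
      proof (cases "u \<in> Vs")
        case False
        then have "(\<Sum>X\<in>Q. z$(rep X) *\<^sub>R ind X) $ u = 0"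
          using Qsub by (auto simp: sum_component ind_def intro!: sum.neutral) blast
        then show ?thesis using False z by (simp add: K_def)
      next
        case True
        define X0 where "X0 = R``{u}"
        have X0Q: "X0 \<in> Q" using True by (auto simp: X0_def Q_def quotient_def)
        have uX0: "u \<in> X0" using eqR by (auto simp: X0_def equiv_def refl_on_def)
        have "(\<Sum>X\<in>Q. z$(rep X) *\<^sub>R ind X) $ u = (\<Sum>X\<in>Q. if X = X0 then z$(rep X) else 0)"
        proof -
          have "(\<Sum>X\<in>Q. z$(rep X) *\<^sub>R ind X) $ u = (\<Sum>X\<in>Q. z $ rep X * ind X $ u)" by simp
          also have "\<dots> = (\<Sum>X\<in>Q. if X = X0 then z$(rep X) else 0)"
          proof (rule sum.cong[OF refl])
            fix X assume XQ: "X \<in> Q"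
            show "z $ rep X * ind X $ u = (if X = X0 then z $ rep X else 0)"
              using Qdisj[OF XQ X0Q] uX0 by (auto simp: ind_def)
          qed
          finally show ?thesis .
        qed
        also have "\<dots> = z$(rep X0)" using X0Q finQ by simp
        also have "\<dots> = z$u"
        proof -
          have "rep X0 \<in> X0" using repX X0Q by blast
          then have "(u, rep X0) \<in> R" by (simp add: X0_def)
          then show ?thesis using zc by simp
        qed
        finally show ?thesis by simp
      qed
    qed
    also have "\<dots> \<in> span B"
      by (rule span_sum, rule span_scale, rule span_base) (auto simp: B_def)
    finally show "z \<in> span B" .
  qed
  have "span B = K" using BK KB sK span_minimal[of B K] by (auto simp: span_eq_iff)
  then have "dim K = card B" using dim_span_eq_card_independent[OF indep] by simp
  then show ?thesis using cardB by (simp add: K_def Q_def)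
qed



lemma dim_cycle:
  fixes src tgt :: "'e::finite \<Rightarrow> 'v::finite" and Es :: "'e set"
  defines "Vs \<equiv> src ` Es \<union> tgt ` Es"
  defines "R \<equiv> ({(src e, tgt e) | e. e \<in> Es} \<union> {(tgt e, src e) | e. e \<in> Es})\<^sup>*"
  shows "dim {y. bd src tgt y = 0 \<and> (\<forall>e. e \<notin> Es \<longrightarrow> y$e = 0)} = card Es + card (Vs // R) - card Vs"
proof -
  define S where "S = {y::real^'e. \<forall>e. e \<notin> Es \<longrightarrow> y$e = 0}"
  define T where "T = {z::real^'v. \<forall>v. v \<notin> Vs \<longrightarrow> z$v = 0}"
  define I where "I = bd src tgt ` S"
  have sS: "subspace S" unfolding S_def by (rule subspace_coord)
  have sT: "subspace T" unfolding T_def by (rule subspace_coord)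
  have sI: "subspace I" unfolding I_def by (rule linear_subspace_image[OF linear_bd sS])
  have dS: "dim S = card Es" unfolding S_def by (rule dim_coord)
  have dT: "dim T = card Vs" unfolding T_def by (rule dim_coord)
  have rn: "dim I + dim {y\<in>S. bd src tgt y = 0} = dim S"
    unfolding I_def by (rule rank_nullity[OF linear_bd sS])
  have WS: "{y\<in>S. bd src tgt y = 0} = {y. bd src tgt y = 0 \<and> (\<forall>e. e \<notin> Es \<longrightarrow> y$e = 0)}"
    by (auto simp: S_def)
  have IT: "I \<subseteq> T"
  proof
    fix x assume "x \<in> I"
    then obtain y where y: "y \<in> S" "x = bd src tgt y" by (auto simp: I_def)
    show "x \<in> T" unfolding T_def mem_Collect_eq
    proof (intro allI impI)
      fix v assume v: "v \<notin> Vs"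
      have "y$e * ((if src e = v then 1 else 0) - (if tgt e = v then 1 else 0)) = 0" for e
        using y(1) v by (cases "e \<in> Es") (auto simp: S_def Vs_def)
      then show "x$v = 0" using y(2) unfolding bd_def by (simp only: vec_lambda_beta sum.neutral_const)
    qed
  qed
  have KK: "{z\<in>T. \<forall>x\<in>I. orthogonal x z} =
     {z::real^'v. (\<forall>v. v \<notin> Vs \<longrightarrow> z$v = 0) \<and> (\<forall>e\<in>Es. z$(src e) = z$(tgt e))}"
  proof (rule set_eqI, rule iffI)
    fix z assume z: "z \<in> {z\<in>T. \<forall>x\<in>I. orthogonal x z}"
    have "z$(src e) = z$(tgt e)" if e: "e \<in> Es" for e
    proof -
      have "axis e 1 \<in> S" by (auto simp: S_def axis_def e)
      then have "orthogonal (bd src tgt (axis e 1)) z" using z by (auto simp: I_def)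
      then have "axis e (1::real) \<bullet> cob src tgt z = 0" by (simp add: orthogonal_def bd_inner)
      moreover have "axis e (1::real) \<bullet> cob src tgt z = cob src tgt z $ e"
        by (simp add: inner_vec_def axis_def if_distrib[of "\<lambda>t. t * _"] cong: if_cong)
      ultimately show ?thesis by (simp add: cob_def)
    qed
    then show "z \<in> {z::real^'v. (\<forall>v. v \<notin> Vs \<longrightarrow> z$v = 0) \<and> (\<forall>e\<in>Es. z$(src e) = z$(tgt e))}"
      using z by (auto simp: T_def)
  next
    fix z assume z: "z \<in> {z::real^'v. (\<forall>v. v \<notin> Vs \<longrightarrow> z$v = 0) \<and> (\<forall>e\<in>Es. z$(src e) = z$(tgt e))}"
    have "orthogonal x z" if "x \<in> I" for x
    proof -
      obtain y where y: "y \<in> S" "x = bd src tgt y" using \<open>x \<in> I\<close> by (auto simp: I_def)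
      have "y$e * cob src tgt z $ e = 0" for e
        using y(1) z by (cases "e \<in> Es") (auto simp: S_def cob_def)
      then have "y \<bullet> cob src tgt z = 0" unfolding inner_vec_def inner_real_def by (simp only: sum.neutral_const)
      then show ?thesis using y by (simp add: orthogonal_def bd_inner)
    qed
    then show "z \<in> {z\<in>T. \<forall>x\<in>I. orthogonal x z}" using z by (auto simp: T_def)
  qed
  have dK: "dim {z\<in>T. \<forall>x\<in>I. orthogonal x z} + dim I = dim T"
    by (rule dim_subspace_orthogonal_to_vectors[OF sI sT IT])
  have cK: "dim {z\<in>T. \<forall>x\<in>I. orthogonal x z} = card (Vs // R)"
    unfolding KK Vs_def R_def by (rule dim_K)
  show ?thesis using rn dK cK dS dT WS by simp
qed



definition cvec :: "'e::finite \<times> bool \<Rightarrow> real^'e" where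
  "cvec d = (\<chi> e. if e = fst d then (if snd d then 1 else -1) else 0)"

definition circ :: "('e \<Rightarrow> 'v) \<Rightarrow> ('e \<Rightarrow> 'v) \<Rightarrow> ('e \<times> bool) list \<Rightarrow> bool" where
  "circ src tgt cs \<longleftrightarrow> cs \<noteq> [] \<and> distinct (map fst cs)
        \<and> distinct (map (otail src tgt) cs)
        \<and> (\<forall>i<length cs. ohead src tgt (cs ! i) = otail src tgt (cs ! ((i + 1) mod length cs)))"

lemma is_circuit_circ: "is_circuit src tgt D \<longleftrightarrow> (\<exists>cs. circ src tgt cs \<and> set cs = D)"
  unfolding is_circuit_def circ_def by blast

lemma cvec_comp: "cvec d $ e = (if d = (e,True) then 1 else 0) - (if d = (e,False) then 1 else 0)"
  by (cases d) (auto simp: cvec_def)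

lemma chain_of_sum:
  fixes D :: "('e::finite \<times> bool) set"
  assumes "inj_on fst D"
  shows "chain_of D = (\<Sum>d\<in>D. cvec d)"
proof (subst vec_eq_iff, rule allI)
  fix e
  have nb: "\<not> ((e,True) \<in> D \<and> (e,False) \<in> D)" using assms by (force simp: inj_on_def)
  have "(\<Sum>d\<in>D. cvec d) $ e = (\<Sum>d\<in>D. (if d = (e,True) then 1 else 0) - (if d = (e,False) then 1 else 0))"
    by (simp add: cvec_comp)
  also have "\<dots> = (if (e,True) \<in> D then 1 else 0) - (if (e,False) \<in> D then 1 else 0)"
    by (simp add: sum_subtractf)
  finally show "chain_of D $ e = (\<Sum>d\<in>D. cvec d) $ e"
    using nb by (auto simp: chain_of_def)
qed

lemma bd_cvec:
  fixes src tgt :: "'e::finite \<Rightarrow> 'v::finite"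
  shows "bd src tgt (cvec d) = (\<chi> v. (if otail src tgt d = v then 1 else 0) - (if ohead src tgt d = v then 1 else 0))"
proof (subst vec_eq_iff, rule allI)
  fix v
  have "bd src tgt (cvec d) $ v = (\<Sum>e\<in>UNIV. if e = fst d then (if snd d then 1 else -1) * ((if src e = v then 1 else 0) - (if tgt e = v then 1 else 0)) else 0)"
    unfolding bd_def cvec_def vec_lambda_beta by (intro sum.cong) simp_all
  also have "\<dots> = (if snd d then 1 else -1) * ((if src (fst d) = v then 1 else 0) - (if tgt (fst d) = v then 1 else 0))"
    by simp
  finally show "bd src tgt (cvec d) $ v = (\<chi> v. (if otail src tgt d = v then 1 else 0) - (if ohead src tgt d = v then 1 else 0)) $ v"
    by (auto simp: otail_def ohead_def)
qed

lemma sum_rotate: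
  fixes f :: "nat \<Rightarrow> 'a::comm_monoid_add"
  assumes "n > 0"
  shows "(\<Sum>i<n. f ((i + 1) mod n)) = (\<Sum>i<n. f i)"
proof (rule sum.reindex_bij_witness[where i = "\<lambda>i. (i + n - 1) mod n" and j = "\<lambda>i. (i + 1) mod n"])
  fix a assume a: "a \<in> {..<n}"
  show "(a + n - 1) mod n \<in> {..<n}" using assms by simp
  show "((a + n - 1) mod n + 1) mod n = a"
    using a assms by (cases a) (auto simp: mod_Suc)
  show "(a + 1) mod n \<in> {..<n}" using assms by simp
  show "((a + 1) mod n + n - 1) mod n = a"
    using a assms by (auto simp: mod_Suc)
qed simp

lemma circ_flow:
  fixes src tgt :: "'e::finite \<Rightarrow> 'v::finite"
  assumes "circ src tgt cs"
  shows "bd src tgt (chain_of (set cs)) = 0"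
proof -
  define n where "n = length cs"
  have n: "n > 0" using assms by (auto simp: circ_def n_def)
  have dfst: "distinct (map fst cs)" using assms by (simp add: circ_def)
  then have inj: "inj_on fst (set cs)" and dcs: "distinct cs" by (simp_all add: distinct_map)
  have "chain_of (set cs) = (\<Sum>d\<in>set cs. cvec d)" by (rule chain_of_sum[OF inj])
  also have "\<dots> = (\<Sum>i<n. cvec (cs!i))"
  proof -
    have "set cs = (!) cs ` {..<n}" by (auto simp: n_def set_conv_nth)
    moreover have "inj_on ((!) cs) {..<n}" using dcs by (auto simp: n_def inj_on_def nth_eq_iff_index_eq)
    ultimately show ?thesis by (simp add: sum.reindex)
  qed
  finally have "bd src tgt (chain_of (set cs)) = (\<Sum>i<n. bd src tgt (cvec (cs!i)))"
    by (simp add: linear_sum[OF linear_bd])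
  also have "\<dots> = 0"
  proof (subst vec_eq_iff, rule allI)
    fix v
    have "(\<Sum>i<n. bd src tgt (cvec (cs!i))) $ v
        = (\<Sum>i<n. (if otail src tgt (cs!i) = v then 1 else 0)) - (\<Sum>i<n. (if ohead src tgt (cs!i) = v then (1::real) else 0))"
      by (simp add: bd_cvec sum_subtractf)
    also have "(\<Sum>i<n. (if ohead src tgt (cs!i) = v then (1::real) else 0)) = (\<Sum>i<n. (if otail src tgt (cs!((i + 1) mod n)) = v then 1 else 0))"
      using assms by (auto simp: circ_def n_def intro!: sum.cong)
    also have "\<dots> = (\<Sum>i<n. (if otail src tgt (cs!i) = v then 1 else 0))"
      by (rule sum_rotate[OF n, where f = "\<lambda>i. if otail src tgt (cs!i) = v then 1 else 0"])
    finally show "(\<Sum>i<n. bd src tgt (cvec (cs!i))) $ v = 0 $ v" by simp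
  qed
  finally show ?thesis .
qed



lemma supp_fst_inj: "a \<in> supp y \<Longrightarrow> b \<in> supp y \<Longrightarrow> fst a = fst b \<Longrightarrow> a = b"
  by (cases a; cases b) (auto simp: supp_def oval_def split: if_splits)

lemma flow_out:
  fixes src tgt :: "'e::finite \<Rightarrow> 'v::finite"
  assumes fl: "bd src tgt y = 0" and d: "d \<in> supp y"
  shows "\<exists>d'\<in>supp y. otail src tgt d' = ohead src tgt d"
proof (rule ccontr)
  assume no: "\<not> ?thesis"
  define v where "v = ohead src tgt d"
  define r where "r = (fst d, \<not> snd d)"
  have rv: "otail src tgt r = v" by (auto simp: r_def v_def otail_def ohead_def)
  have rneg: "oval y r < 0" using d by (auto simp: r_def supp_def oval_def)
  have fin: "finite {d. otail src tgt d = v}" by simp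
  have le: "\<forall>x\<in>{d. otail src tgt d = v}. oval y x \<le> 0"
    using no by (auto simp: supp_def v_def not_less)
  have "(\<Sum>x\<in>{d. otail src tgt d = v}. oval y x) < 0"
  proof -
    have "(\<Sum>x\<in>{d. otail src tgt d = v}. oval y x) < (\<Sum>x\<in>{d. otail src tgt d = v}. 0)"
    proof (rule sum_strict_mono_ex1[OF fin])
      show "\<forall>x\<in>{d. otail src tgt d = v}. oval y x \<le> 0" using le by blast
      show "\<exists>x\<in>{d. otail src tgt d = v}. oval y x < 0" using rv rneg by blast
    qed
    then show ?thesis by simp
  qed
  moreover have "is_flow src tgt y" using fl by (simp add: is_flow_bd)
  ultimately show False by (simp add: is_flow_def)
qed

lemma circuit_exists:
  fixes src tgt :: "'e::finite \<Rightarrow> 'v::finite"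
  assumes fl: "bd src tgt y = 0" and nz: "y \<noteq> 0"
  shows "\<exists>cs. circ src tgt cs \<and> set cs \<subseteq> supp y"
proof -
  obtain nx where nx: "\<And>d. d \<in> supp y \<Longrightarrow> nx d \<in> supp y \<and> otail src tgt (nx d) = ohead src tgt d"
    using flow_out[OF fl] by metis
  obtain e where "y$e \<noteq> 0" using nz by (auto simp: vec_eq_iff)
  then obtain d0 where d0: "d0 \<in> supp y"
  proof (cases "y$e > 0")
    case True
    then have "(e,True) \<in> supp y" by (simp add: supp_def oval_def)
    then show ?thesis using that by blast
  next
    case False
    then have "(e,False) \<in> supp y" using \<open>y$e \<noteq> 0\<close> by (simp add: supp_def oval_def)
    then show ?thesis using that by blast
  qed
  define w where "w k = (nx ^^ k) d0" for k
  have wS: "w k \<in> supp y" for k by (induction k) (auto simp: w_def d0 nx)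
  have wstep: "otail src tgt (w (Suc k)) = ohead src tgt (w k)" for k
    using nx wS by (simp add: w_def)
  define tl where "tl k = otail src tgt (w k)" for k
  define P where "P j = (\<exists>i<j. tl i = tl j)" for j
  have "\<not> inj_on tl {..CARD('v)}"
  proof
    assume "inj_on tl {..CARD('v)}"
    then have "card (tl ` {..CARD('v)}) = Suc CARD('v)" by (simp add: card_image)
    moreover have "card (tl ` {..CARD('v)}) \<le> CARD('v)" by (rule card_mono) auto
    ultimately show False by simp
  qed
  then obtain a b where "a \<noteq> b" "tl a = tl b" "a \<le> CARD('v)" "b \<le> CARD('v)" by (auto simp: inj_on_def)
  then have "\<exists>j. P j" unfolding P_def by (metis linorder_neqE_nat)
  define j where "j = (LEAST j. P j)"
  have Pj: "P j" unfolding j_def by (rule LeastI_ex) fact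
  have minj: "\<not> P j'" if "j' < j" for j' using not_less_Least[of j' P] that by (simp add: j_def)
  obtain i where ij: "i < j" "tl i = tl j" using Pj by (auto simp: P_def)
  define cs where "cs = map w [i..<j]"
  have lcs: "length cs = j - i" by (simp add: cs_def)
  have csn: "k < j - i \<Longrightarrow> cs ! k = w (i + k)" for k by (simp add: cs_def)
  have dtl: "distinct (map (otail src tgt) cs)"
  proof -
    have "map (otail src tgt) cs = map tl [i..<j]" by (simp add: cs_def tl_def)
    moreover have "inj_on tl {i..<j}"
    proof (rule inj_onI, rule ccontr)
      fix a b assume a: "a \<in> {i..<j}" "b \<in> {i..<j}" "tl a = tl b" "a \<noteq> b"
      then consider "a < b" | "b < a" by linarith
      then show False
      proof cases
        case 1 then show False using minj[of b] a by (auto simp: P_def)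
      next
        case 2 then show False using minj[of a] a by (auto simp: P_def)
      qed
    qed
    ultimately show ?thesis by (simp add: distinct_map)
  qed
  have setcs: "set cs \<subseteq> supp y" using wS by (auto simp: cs_def)
  have dcs: "distinct cs" using dtl by (simp add: distinct_map)
  have "inj_on fst (set cs)" using setcs supp_fst_inj by (meson inj_onI subsetD)
  then have dfst: "distinct (map fst cs)" using dcs by (simp add: distinct_map)
  have clos: "ohead src tgt (cs ! k) = otail src tgt (cs ! ((k + 1) mod length cs))" if k: "k < length cs" for k
  proof (cases "k + 1 < length cs")
    case True
    then show ?thesis using k lcs csn wstep[of "i+k"] by simp
  next
    case False
    then have k1: "k + 1 = j - i" using k lcs by simp
    then have "(k + 1) mod length cs = 0" using lcs by simp
    moreover have "ohead src tgt (cs ! k) = tl j" using k lcs csn wstep[of "i+k"] k1 ij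
      by (simp add: tl_def) (metis Suc_eq_plus1 add_Suc_right le_add_diff_inverse less_imp_le_nat)
    moreover have "otail src tgt (cs ! 0) = tl i" using csn[of 0] ij by (simp add: tl_def)
    ultimately show ?thesis using ij by simp
  qed
  have "circ src tgt cs" unfolding circ_def using ij lcs dfst dtl clos by auto
  then show ?thesis using setcs by blast
qed



lemma oval_diff: "oval (a - c *\<^sub>R b) d = oval a d - c * oval b d"
  by (simp add: oval_def)

lemma oval_rev: "oval x (fst d, \<not> snd d) = - oval x d"
  by (simp add: oval_def)

lemma oval_zero_iff: "oval x d = 0 \<longleftrightarrow> x $ fst d = 0"
  by (simp add: oval_def)

lemma oval_chain:
  assumes "inj_on fst C"
  shows "oval (chain_of C) d = (if d \<in> C then 1 else if (fst d, \<not> snd d) \<in> C then -1 else 0)"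
proof -
  obtain e b where d: "d = (e,b)" by (cases d)
  have nb: "\<not> ((e,True) \<in> C \<and> (e,False) \<in> C)" using assms by (force simp: inj_on_def)
  show ?thesis using nb by (cases b) (auto simp: d oval_def chain_of_def)
qed

lemma flow_span:
  fixes src tgt :: "'e::finite \<Rightarrow> 'v::finite"
  assumes "bd src tgt y = 0"
  shows "y \<in> span {chain_of (set cs) | cs. circ src tgt cs \<and> set cs \<subseteq> supp y}"
  using assms
proof (induction "card {e. y$e \<noteq> 0}" arbitrary: y rule: less_induct)
  case less
  show ?case
  proof (cases "y = 0")
    case True then show ?thesis by (simp add: span_zero)
  next
    case False
    obtain cs where cs: "circ src tgt cs" "set cs \<subseteq> supp y"
      using circuit_exists[OF less.prems False] by blast
    define C where "C = set cs"
    have Cne: "C \<noteq> {}" using cs by (auto simp: circ_def C_def)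
    have injC: "inj_on fst C" using cs by (simp add: circ_def C_def distinct_map)
    have finC: "finite C" by (simp add: C_def)
    define t where "t = Min (oval y ` C)"
    obtain d0 where d0: "d0 \<in> C" "oval y d0 = t"
    proof -
      have "t \<in> oval y ` C" unfolding t_def using finC Cne by (intro Min_in) auto
      then show ?thesis using that by blast
    qed
    have tle: "t \<le> oval y d" if "d \<in> C" for d using that finC by (simp add: t_def)
    have tpos: "t > 0" using d0 cs by (auto simp: C_def supp_def)
    define y' where "y' = y - t *\<^sub>R chain_of C"
    have fl': "bd src tgt y' = 0"
      using less.prems circ_flow[OF cs(1)] linear_diff[OF linear_bd[of src tgt]] linear_cmul[OF linear_bd[of src tgt]]
      by (simp add: y'_def C_def)
    have ov': "oval y' d = oval y d - t * (if d \<in> C then 1 else if (fst d, \<not> snd d) \<in> C then -1 else 0)" for d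
      by (simp add: y'_def oval_diff oval_chain[OF injC])
    have suppsub: "supp y' \<subseteq> supp y"
    proof
      fix d assume d: "d \<in> supp y'"
      show "d \<in> supp y"
      proof (cases "d \<in> C")
        case True then show ?thesis using cs by (auto simp: C_def)
      next
        case nC: False
        show ?thesis
        proof (cases "(fst d, \<not> snd d) \<in> C")
          case True
          have "t \<le> oval y (fst d, \<not> snd d)" using tle[OF True] .
          then show ?thesis using d ov'[of d] nC True by (simp add: supp_def oval_rev)
        next
          case False
          then show ?thesis using d ov'[of d] nC by (simp add: supp_def)
        qed
      qed
    qed
    have nzsub: "{e. y'$e \<noteq> 0} \<subset> {e. y$e \<noteq> 0}"
    proof
      show "{e. y'$e \<noteq> 0} \<subseteq> {e. y$e \<noteq> 0}"
      proof
        fix e assume e: "e \<in> {e. y'$e \<noteq> 0}"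
        then have "oval y' (e,True) \<noteq> 0" by (simp add: oval_def)
        then have "(e,True) \<in> supp y' \<or> (e,False) \<in> supp y'" by (auto simp: supp_def oval_def)
        then have "(e,True) \<in> supp y \<or> (e,False) \<in> supp y" using suppsub by blast
        then show "e \<in> {e. y$e \<noteq> 0}" by (auto simp: supp_def oval_def)
      qed
      have "y'$(fst d0) = 0" using ov'[of d0] d0 by (simp add: oval_zero_iff[symmetric])
      moreover have "y$(fst d0) \<noteq> 0" using d0 tpos by (simp add: oval_zero_iff[symmetric])
      ultimately show "{e. y'$e \<noteq> 0} \<noteq> {e. y$e \<noteq> 0}" by blast
    qed
    have "card {e. y'$e \<noteq> 0} < card {e. y$e \<noteq> 0}"
      by (rule psubset_card_mono[OF _ nzsub]) simp
    then have "y' \<in> span {chain_of (set cs) | cs. circ src tgt cs \<and> set cs \<subseteq> supp y'}"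
      using less.hyps fl' by blast
    also have "\<dots> \<subseteq> span {chain_of (set cs) | cs. circ src tgt cs \<and> set cs \<subseteq> supp y}"
      by (rule span_mono) (use suppsub in blast)
    finally have y'S: "y' \<in> span {chain_of (set cs) | cs. circ src tgt cs \<and> set cs \<subseteq> supp y}" .
    have "chain_of C \<in> span {chain_of (set cs) | cs. circ src tgt cs \<and> set cs \<subseteq> supp y}"
      by (rule span_base) (use cs in \<open>auto simp: C_def\<close>)
    then have "y' + t *\<^sub>R chain_of C \<in> span {chain_of (set cs) | cs. circ src tgt cs \<and> set cs \<subseteq> supp y}"
      using y'S by (intro span_add span_scale)
    then show ?thesis by (simp add: y'_def)
  qed
qed



lemma int_ge1: "(r::real) \<in> \<int> \<Longrightarrow> r > 0 \<Longrightarrow> r \<ge> 1"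
  by (auto elim!: Ints_cases)

lemma int_flowsD:
  fixes src tgt :: "'e::finite \<Rightarrow> 'v::finite"
  shows "l \<in> int_flows src tgt \<Longrightarrow> bd src tgt l = 0 \<and> (\<forall>e. l$e \<in> \<int>)"
  by (simp add: int_flows_def flows_bd)

lemma circ_int_flow:
  fixes src tgt :: "'e::finite \<Rightarrow> 'v::finite"
  shows "circ src tgt cs \<Longrightarrow> chain_of (set cs) \<in> int_flows src tgt"
  using circ_flow[of src tgt cs] by (auto simp: int_flows_def flows_bd) (auto simp: chain_of_def)

lemma int_flows_diff:
  fixes src tgt :: "'e::finite \<Rightarrow> 'v::finite"
  shows "a \<in> int_flows src tgt \<Longrightarrow> b \<in> int_flows src tgt \<Longrightarrow> a - b \<in> int_flows src tgt"
  by (auto simp: int_flows_def flows_bd linear_diff[OF linear_bd[of src tgt]])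

lemma mu_nonneg:
  assumes "set cs \<subseteq> supp l" "\<forall>e. l$e \<in> \<int>" "inj_on fst (set cs)"
  shows "chain_of (set cs) \<bullet> (l - chain_of (set cs)) \<ge> 0"
  unfolding inner_vec_def
proof (rule sum_nonneg)
  fix e :: 'a
  let ?m = "chain_of (set cs)"
  have nb: "\<not> ((e,True) \<in> set cs \<and> (e,False) \<in> set cs)" using assms(3) by (force simp: inj_on_def)
  show "?m $ e \<bullet> (l - ?m) $ e \<ge> 0"
  proof (cases "(e,True) \<in> set cs")
    case True
    then have "l$e > 0" using assms(1) by (auto simp: supp_def oval_def)
    then have "l$e \<ge> 1" using assms(2) int_ge1 by blast
    then show ?thesis using True by (simp add: chain_of_def)
  next
    case F: False
    show ?thesis
    proof (cases "(e,False) \<in> set cs")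
      case True
      then have "- l$e > 0" using assms(1) by (auto simp: supp_def oval_def)
      then have "- l$e \<ge> 1" using assms(2) int_ge1[of "- l$e"] by (simp add: Ints_minus)
      then show ?thesis using True F by (simp add: chain_of_def)
    qed (use F in \<open>simp add: chain_of_def\<close>)
  qed
qed

lemma key:
  fixes src tgt :: "'e::finite \<Rightarrow> 'v::finite"
  assumes l: "l \<in> int_flows src tgt" and x: "x \<in> voronoi src tgt 0 \<inter> voronoi src tgt l"
    and cs: "circ src tgt cs" "set cs \<subseteq> supp l"
  shows "2 * (x \<bullet> chain_of (set cs)) = l \<bullet> chain_of (set cs)"
    and "chain_of (set cs) \<bullet> (l - chain_of (set cs)) = 0"
proof -
  let ?m = "chain_of (set cs)"
  have m: "?m \<in> int_flows src tgt" by (rule circ_int_flow[OF cs(1)])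
  have lm: "l - ?m \<in> int_flows src tgt" by (rule int_flows_diff[OF l m])
  have z: "0 \<in> int_flows src tgt" by (simp add: int_flows_def flows_bd linear_0[OF linear_bd])
  have x0: "\<And>\<mu>. \<mu> \<in> int_flows src tgt \<Longrightarrow> qf x \<le> qf (x - \<mu>)" using x by (auto simp: voronoi_def)
  have xl: "qf (x - l) \<le> qf x" using x z by (force simp: voronoi_def)
  have a: "qf x \<le> qf (x - ?m)" by (rule x0[OF m])
  have b: "qf x \<le> qf (x - (l - ?m))" by (rule x0[OF lm])
  have c: "qf x \<le> qf (x - l)" using x0 l by blast
  have inj: "inj_on fst (set cs)" using cs(1) by (simp add: circ_def distinct_map)
  have nn: "?m \<bullet> (l - ?m) \<ge> 0" using mu_nonneg[OF cs(2) _ inj] int_flowsD[OF l] by blast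
  have ex: "(x - l - (- ?m)) = x - (l - ?m)" by simp
  note defs = qf_inner inner_diff_left inner_diff_right inner_commute
  have a': "2 * (x \<bullet> ?m) \<le> ?m \<bullet> ?m" using a by (simp add: defs)
  have b': "2 * (x \<bullet> l) - 2 * (x \<bullet> ?m) \<le> l \<bullet> l - 2 * (l \<bullet> ?m) + ?m \<bullet> ?m" using b by (simp add: defs)
  have c': "2 * (x \<bullet> l) = l \<bullet> l" using c xl by (simp add: defs)
  have nn': "l \<bullet> ?m - ?m \<bullet> ?m \<ge> 0" using nn by (simp add: defs)
  have e1: "l \<bullet> ?m = ?m \<bullet> ?m" using a' b' c' nn' by linarith
  then show "?m \<bullet> (l - ?m) = 0" by (simp add: defs)
  show "2 * (x \<bullet> ?m) = l \<bullet> ?m" using a' b' c' nn' e1 by linarith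
qed



lemma fst_supp: "fst ` supp l = {e. l$e \<noteq> 0}"
proof (rule set_eqI, rule iffI)
  fix e assume "e \<in> fst ` supp l"
  then show "e \<in> {e. l$e \<noteq> 0}" by (auto simp: supp_def oval_def split: if_splits)
next
  fix e assume e: "e \<in> {e. l$e \<noteq> 0}"
  show "e \<in> fst ` supp l"
  proof (cases "l$e > 0")
    case True then have "(e,True) \<in> supp l" by (simp add: supp_def oval_def)
    then show ?thesis by force
  next
    case False then have "(e,False) \<in> supp l" using e by (simp add: supp_def oval_def)
    then show ?thesis by force
  qed
qed

lemma W_span:
  fixes src tgt :: "'e::finite \<Rightarrow> 'v::finite"
  assumes l: "l \<in> int_flows src tgt" and w: "bd src tgt w = 0" "\<forall>e. e \<notin> fst ` supp l \<longrightarrow> w$e = 0"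
  shows "w \<in> span {chain_of (set cs) | cs. circ src tgt cs \<and> set cs \<subseteq> supp l}"
proof -
  let ?S = "span {chain_of (set cs) | cs. circ src tgt cs \<and> set cs \<subseteq> supp l}"
  have lfl: "bd src tgt l = 0" and lint: "\<forall>e. l$e \<in> \<int>" using int_flowsD[OF l] by auto
  define s where "s = (\<Sum>e\<in>UNIV. \<bar>w$e\<bar>)"
  have s0: "s \<ge> 0" by (simp add: s_def sum_nonneg)
  define \<epsilon> where "\<epsilon> = 1 / (1 + s)"
  have \<epsilon>pos: "\<epsilon> > 0" using s0 by (simp add: \<epsilon>_def)
  have small: "\<epsilon> * \<bar>w$e\<bar> < 1" for e
  proof -
    have "\<bar>w$e\<bar> \<le> s" unfolding s_def by (rule member_le_sum) auto
    then have "\<bar>w$e\<bar> < 1 + s" by simp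
    then show ?thesis using s0 by (simp add: \<epsilon>_def field_simps)
  qed
  define y where "y = l + \<epsilon> *\<^sub>R w"
  have yfl: "bd src tgt y = 0"
    using lfl w(1) by (simp add: y_def linear_add[OF linear_bd[of src tgt]] linear_cmul[OF linear_bd[of src tgt]])
  have suppy: "supp y = supp l"
  proof (rule set_eqI)
    fix d :: "'e \<times> bool"
    have ov: "oval y d = oval l d + \<epsilon> * oval w d" by (simp add: y_def oval_def)
    have sm: "\<bar>\<epsilon> * oval w d\<bar> < 1" using small[of "fst d"] \<epsilon>pos by (simp add: oval_def abs_mult)
    show "d \<in> supp y \<longleftrightarrow> d \<in> supp l"
    proof (cases "l $ fst d = 0")
      case True
      then have "fst d \<notin> fst ` supp l" by (simp add: fst_supp)
      then have "w $ fst d = 0" using w(2) by blast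
      then show ?thesis using True ov by (simp add: supp_def oval_def)
    next
      case False
      have "oval l d \<in> \<int>" using lint by (simp add: oval_def)
      moreover have "oval l d \<noteq> 0" using False by (simp add: oval_zero_iff)
      ultimately have "oval l d \<ge> 1 \<or> oval l d \<le> -1"
        using int_ge1[of "oval l d"] int_ge1[of "- oval l d"] by (force simp: Ints_minus)
      then show ?thesis using ov sm by (auto simp: supp_def)
    qed
  qed
  have yS: "y \<in> ?S" using flow_span[OF yfl] suppy by simp
  have lS: "l \<in> ?S" using flow_span[OF lfl] by simp
  have "(1/\<epsilon>) *\<^sub>R (y - l) \<in> ?S" by (intro span_scale span_diff yS lS)
  moreover have "(1/\<epsilon>) *\<^sub>R (y - l) = w" using \<epsilon>pos by (simp add: y_def)
  ultimately show ?thesis by simp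
qed

lemma V0_ball:
  fixes src tgt :: "'e::finite \<Rightarrow> 'v::finite"
  shows "flows src tgt \<inter> ball 0 (1/2) \<subseteq> voronoi src tgt 0"
proof
  fix x assume x: "x \<in> flows src tgt \<inter> ball 0 (1/2)"
  have "qf (x - 0) \<le> qf (x - \<mu>)" if \<mu>: "\<mu> \<in> int_flows src tgt" for \<mu>
  proof (cases "\<mu> = 0")
    case True then show ?thesis by simp
  next
    case False
    then obtain e where e: "\<mu>$e \<noteq> 0" by (auto simp: vec_eq_iff)
    have "\<mu>$e \<in> \<int>" using \<mu> by (simp add: int_flows_def)
    then have "\<bar>\<mu>$e\<bar> \<ge> 1" using e int_ge1[of "\<bar>\<mu>$e\<bar>"] by simp
    then have n1: "norm \<mu> \<ge> 1" using component_le_norm_cart[of \<mu> e] by simp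
    have nx: "norm x < 1/2" using x by simp
    have "norm (x - \<mu>) \<ge> norm \<mu> - norm x" using norm_triangle_ineq2[of \<mu> x] by (simp add: norm_minus_commute)
    then have "norm x \<le> norm (x - \<mu>)" using n1 nx by linarith
    then have "norm x ^ 2 \<le> norm (x - \<mu>) ^ 2" by (simp add: power_mono)
    then show ?thesis by (simp add: qf_inner power2_norm_eq_inner)
  qed
  then show "x \<in> voronoi src tgt 0" using x by (simp add: voronoi_def)
qed



lemma dim1_mult:
  fixes W :: "(real^'n::finite) set"
  assumes sW: "subspace W" and d: "dim W \<le> 1" and m: "m \<in> W" "m \<noteq> 0" and l: "l \<in> W"
  shows "\<exists>c. l = c *\<^sub>R m"
proof (rule ccontr)
  assume no: "\<not> ?thesis"
  then have "l \<notin> span {m}" by (auto simp: span_singleton)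
  moreover have "l \<noteq> m" using no by (metis scaleR_one)
  ultimately have "independent {l, m}" using m by (simp add: independent_insert)
  then have "card {l, m} \<le> dim W" using l m by (intro independent_card_le_dim) auto
  then show False using d \<open>l \<noteq> m\<close> by simp
qed

theorem mainTheorem3:
  fixes src tgt :: "'e::finite \<Rightarrow> 'v::finite" and l :: "real^'e"
  assumes "graph_connected src tgt"
    and "l \<in> int_flows src tgt"
    and "voronoi src tgt 0 \<inter> voronoi src tgt l \<noteq> {}"
  shows "(\<exists>A. affine A \<and> A \<subseteq> flows src tgt
            \<and> aff_dim A = int (dim (flows src tgt)) - int (genus src tgt (supp l))
            \<and> voronoi src tgt 0 \<inter> voronoi src tgt l \<subseteq> A)
       \<and> ((voronoi src tgt 0 \<inter> voronoi src tgt l) facet_of (voronoi src tgt 0)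
            \<longrightarrow> is_circuit src tgt (supp l) \<and> l = chain_of (supp l))"
proof -
  note l = assms(2)
  define H where "H = flows src tgt"
  define F where "F = voronoi src tgt 0 \<inter> voronoi src tgt l"
  define W where "W = {y. bd src tgt y = 0 \<and> (\<forall>e. e \<notin> fst ` supp l \<longrightarrow> y$e = 0)}"
  define Circ where "Circ = {chain_of (set cs) | cs. circ src tgt cs \<and> set cs \<subseteq> supp l}"
  have lfl: "bd src tgt l = 0" and lint: "\<forall>e. l$e \<in> \<int>" using int_flowsD[OF l] by auto
  have sH: "subspace H" unfolding H_def by (rule subspace_flows)
  have lH: "l \<in> H" using lfl by (simp add: H_def flows_bd)
  have sW: "subspace W"
    unfolding W_def by (auto simp: subspace_def linear_add[OF linear_bd[of src tgt]]
        linear_cmul[OF linear_bd[of src tgt]] linear_0[OF linear_bd[of src tgt]])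
  have WH: "W \<subseteq> H" by (auto simp: W_def H_def flows_bd)
  have gW: "genus src tgt (supp l) = dim W"
    unfolding W_def genus_def Let_def by (rule dim_cycle[symmetric])
  have FH: "F \<subseteq> H" by (auto simp: F_def H_def voronoi_def)
  have WC: "W \<subseteq> span Circ" unfolding W_def Circ_def using W_span[OF l] by blast
  have orth: "orthogonal w (x - (1/2) *\<^sub>R l)" if x: "x \<in> F" and w: "w \<in> W" for x w
  proof -
    have "w \<in> span Circ" using WC w by blast
    then have "orthogonal (x - (1/2) *\<^sub>R l) w"
    proof (rule orthogonal_to_span)
      fix c assume "c \<in> Circ"
      then obtain cs where cs: "circ src tgt cs" "set cs \<subseteq> supp l" "c = chain_of (set cs)" by (auto simp: Circ_def)
      have "2 * (x \<bullet> c) = l \<bullet> c" using key(1)[OF l _ cs(1,2)] x cs(3) by (simp add: F_def)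
      then show "orthogonal (x - (1/2) *\<^sub>R l) c" by (simp add: orthogonal_def inner_diff_left)
    qed
    then show ?thesis by (simp add: orthogonal_commute)
  qed
  define U where "U = {z\<in>H. \<forall>w\<in>W. orthogonal w z}"
  define A where "A = (+) ((1/2) *\<^sub>R l) ` U"
  have sU: "subspace U" unfolding U_def using sH
    by (auto simp: subspace_def orthogonal_clauses)
  have dU: "dim U + dim W = dim H" unfolding U_def by (rule dim_subspace_orthogonal_to_vectors[OF sW sH WH])
  have affA: "affine A" unfolding A_def using affine_translation subspace_imp_affine[OF sU] by blast
  have AH: "A \<subseteq> H"
  proof
    fix a assume "a \<in> A"
    then obtain z where z: "z \<in> U" "a = (1/2) *\<^sub>R l + z" by (auto simp: A_def)
    then show "a \<in> H" using sH lH by (auto simp: U_def intro: subspace_add subspace_scale)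
  qed
  have adA: "aff_dim A = int (dim H) - int (dim W)"
    using dU by (simp add: A_def aff_dim_translation_eq aff_dim_subspace[OF sU])
  have FA: "F \<subseteq> A"
  proof
    fix x assume x: "x \<in> F"
    have "x - (1/2) *\<^sub>R l \<in> U" using x FH sH lH orth
      by (auto simp: U_def intro: subspace_diff subspace_scale)
    then have "(1/2) *\<^sub>R l + (x - (1/2) *\<^sub>R l) \<in> A" unfolding A_def by (rule imageI)
    then show "x \<in> A" by simp
  qed
  have part1: "\<exists>A. affine A \<and> A \<subseteq> flows src tgt
            \<and> aff_dim A = int (dim (flows src tgt)) - int (genus src tgt (supp l))
            \<and> F \<subseteq> A"
    using affA AH adA FA gW by (auto simp: H_def)
  have part2: "is_circuit src tgt (supp l) \<and> l = chain_of (supp l)" if fac: "F facet_of voronoi src tgt 0"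
  proof -
    have afF: "aff_dim F = aff_dim (voronoi src tgt 0) - 1" using fac by (simp add: facet_of_def)
    have "aff_dim (H \<inter> ball 0 (1/2)) = aff_dim H"
    proof (rule aff_dim_convex_Int_open)
      show "convex H" by (rule subspace_imp_convex[OF sH])
      show "H \<inter> ball 0 (1/2) \<noteq> {}" using subspace_0[OF sH] by (auto intro!: exI[of _ 0])
    qed simp
    moreover have "aff_dim (H \<inter> ball 0 (1/2)) \<le> aff_dim (voronoi src tgt 0)"
      by (rule aff_dim_subset) (use V0_ball in \<open>simp add: H_def\<close>)
    ultimately have "int (dim H) \<le> aff_dim (voronoi src tgt 0)" by (simp add: aff_dim_subspace[OF sH])
    moreover have "aff_dim F \<le> aff_dim A" by (rule aff_dim_subset[OF FA])
    ultimately have dW: "dim W \<le> 1" using afF adA by linarith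
    have lnz: "l \<noteq> 0"
    proof
      assume "l = 0"
      then have "F = voronoi src tgt 0" by (simp add: F_def)
      then show False using afF by simp
    qed
    obtain cs where cs: "circ src tgt cs" "set cs \<subseteq> supp l" using circuit_exists[OF lfl lnz] by blast
    define C where "C = set cs"
    define m where "m = chain_of C"
    have injC: "inj_on fst C" using cs by (simp add: circ_def C_def distinct_map)
    have Cne: "C \<noteq> {}" using cs by (simp add: circ_def C_def)
    have mW: "m \<in> W"
    proof -
      have "bd src tgt m = 0" using circ_flow[OF cs(1)] by (simp add: m_def C_def)
      moreover have "m$e = 0" if "e \<notin> fst ` supp l" for e
      proof -
        have "(e,True) \<notin> C" "(e,False) \<notin> C" using that cs(2) by (force simp: C_def)+
        then show ?thesis by (simp add: m_def chain_of_def)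
      qed
      ultimately show ?thesis by (simp add: W_def)
    qed
    obtain d0 where d0: "d0 \<in> C" using Cne by blast
    have om: "oval m d = (if d \<in> C then 1 else if (fst d, \<not> snd d) \<in> C then -1 else 0)" for d
      unfolding m_def by (rule oval_chain[OF injC])
    have mnz: "m \<noteq> 0"
    proof
      assume "m = 0"
      then have "oval m d0 = 0" by (simp add: oval_def)
      then show False using om[of d0] d0 by simp
    qed
    have lW: "l \<in> W" using lfl by (simp add: W_def fst_supp)
    obtain c where c: "l = c *\<^sub>R m" using dim1_mult[OF sW dW mW mnz lW] by blast
    have "oval l d0 > 0" using d0 cs(2) by (auto simp: C_def supp_def)
    then have cpos: "c > 0" using om[of d0] d0 c by (simp add: oval_def split: if_splits)
    have suppl: "supp l = C"
    proof (rule set_eqI)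
      fix d
      have "oval l d = c * oval m d" using c by (simp add: oval_def)
      then show "d \<in> supp l \<longleftrightarrow> d \<in> C" using cpos om[of d] by (auto simp: supp_def zero_less_mult_iff)
    qed
    obtain x where x: "x \<in> F" using assms(3) by (auto simp: F_def)
    have "m \<bullet> (l - m) = 0" using key(2)[OF l _ cs(1,2)] x by (simp add: F_def m_def C_def)
    then have "(c - 1) * (m \<bullet> m) = 0" using c by (simp add: inner_diff_right algebra_simps)
    moreover have "m \<bullet> m \<noteq> 0" using mnz by simp
    ultimately have "c = 1" by simp
    then have "l = chain_of (supp l)" using c suppl by (simp add: m_def)
    moreover have "is_circuit src tgt (supp l)" using cs(1) suppl by (auto simp: is_circuit_circ C_def)
    ultimately show ?thesis by simp
  qed
  show ?thesis using part1 part2 by (simp add: F_def)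
qed

end
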